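(* Let $G$ act 3-discontinuously and 2-cocompactly on a compactum $T$ and let $A$ be as in the context. Let $B\subset A$ be infinite, $d\ge 1$ an integer, and $C=N_d(B)$ the set of vertices of $\Gamma_A$ at $\Gamma_A$-distance at most $d$ from $B$. Then a point of $T$ is an accumulation point of $C$ if and only if it is an accumulation point of $B$. In particular, if $(\mathbf b_n)$, $(\mathbf c_n)$ are sequences in $A$ with $d_A(\mathbf b_n,\mathbf c_n)$ uniformly bounded, then $\mathbf b_n\to p\in T$ if and only if $\mathbf c_n\to p$.
   Context: A compactum is a compact Hausdorff space ($\ge3$ points); 3-discontinuous: the induced action on 3-element subsets of $T$ is properly discontinuous; 2-cocompact: the induced action on 2-element subsets is cocompact. An entourage is a neighborhood of the diagonal in the space $S^2T$ of unordered pairs of points of $T$; a set $U\subset T$ is $\mathbf e$-small if $\{x,y\}\in\mathbf e$ for all $x,y\in U$. Entourages $\mathbf a,\mathbf b$ are unlinked if $T=a\cup b$ with $a$ $\mathbf a$-small and $b$ $\mathbf b$-small, linked ($\mathbf a\#\mathbf b$) otherwise. Here $A=G\mathbf a_0$ is the $G$-orbit of an entourage $\mathbf a_0$ linked with itself (so $A$ is discrete: each entourage is linked with only finitely many elements of $A$). $\Gamma_A$ is the graph with vertex set $A$ and edges $\{\mathbf a,\mathbf b\}$ with $\mathbf a\#\mathbf b$; $d_A$ is its graph distance (possibly $\infty$). A point $p\in T$ is an accumulation point of $B\subset A$ if for every open $o\ni p$ in $T$ there are infinitely many $\mathbf b\in B$ with $T\setminus o$ $\mathbf b$-small; $\mathbf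 b_n\to p$ means for every open $o\ni p$, $T\setminus o$ is $\mathbf b_n$-small for all large $n$. *)

theory Defs
  imports "HOL-Analysis.Analysis" "HOL-Algebra.Group_Action" "HOL-Library.Uprod"
begin

text \<open>The compactum T is the type 'a (class t2_space, with compact UNIV and at least
three points). The group G acts on T via phi (a HOL-Algebra group action by
homeomorphisms).\<close>

definition compactum_type :: "'a::t2_space itself \<Rightarrow> bool" where
  "compactum_type _ \<longleftrightarrow> compact (UNIV :: 'a set) \<and>
     (\<exists>x y z :: 'a. x \<noteq> y \<and> y \<noteq> z \<and> x \<noteq> z)"

definition homeo_action :: "('g, 'b) monoid_scheme \<Rightarrow> ('g \<Rightarrow> 'a::topological_space \<Rightarrow> 'a) \<Rightarrow> bool" where
  "homeo_action G \<phi> \<longleftrightarrow> group_action G (UNIV :: 'a set) \<phi> \<and>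
     (\<forall>g\<in>carrier G. continuous_on UNIV (\<phi> g))"

text \<open>Space of 3-element subsets (quotient of distinct triples) and of 2-element subsets.\<close>

definition theta3_top :: "'a::topological_space set topology" where
  "theta3_top = topology (\<lambda>W. W \<subseteq> {S. card S = 3} \<and>
      open {(x, y, z). x \<noteq> y \<and> y \<noteq> z \<and> x \<noteq> z \<and> {x, y, z} \<in> W})"

definition theta2_top :: "'a::topological_space set topology" where
  "theta2_top = topology (\<lambda>W. W \<subseteq> {S. card S = 2} \<and>
      open {(x, y). x \<noteq> y \<and> {x, y} \<in> W})"

definition three_discontinuous :: "('g, 'b) monoid_scheme \<Rightarrow> ('g \<Rightarrow> 'a::topological_space \<Rightarrow> 'a) \<Rightarrow> bool" where
  "three_discontinuous G \<phi> \<longleftrightarrow>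
     (\<forall>K. compactin theta3_top K \<longrightarrow>
        finite {g \<in> carrier G. ((`) (\<phi> g)) ` K \<inter> K \<noteq> {}})"

definition two_cocompact :: "('g, 'b) monoid_scheme \<Rightarrow> ('g \<Rightarrow> 'a::topological_space \<Rightarrow> 'a) \<Rightarrow> bool" where
  "two_cocompact G \<phi> \<longleftrightarrow>
     (\<exists>K. compactin theta2_top K \<and>
        (\<Union>g\<in>carrier G. ((`) (\<phi> g)) ` K) = {S. card S = 2})"

text \<open>S^2 T: unordered pairs (incl. diagonal) with the quotient topology from T x T.\<close>

definition s2_top :: "'a::topological_space uprod topology" where
  "s2_top = topology (\<lambda>V. open {(x, y). Upair x y \<in> V})"

definition entourage :: "'a::topological_space uprod set \<Rightarrow> bool" where
  "entourage e \<longleftrightarrow> (\<exists>V. openin s2_top V \<and> range (\<lambda>x. Upair x x) \<subseteq> V \<and> V \<subseteq> e)"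

definition small :: "'a uprod set \<Rightarrow> 'a set \<Rightarrow> bool" where
  "small e U \<longleftrightarrow> (\<forall>x\<in>U. \<forall>y\<in>U. Upair x y \<in> e)"

definition linked :: "'a uprod set \<Rightarrow> 'a uprod set \<Rightarrow> bool" where
  "linked a b \<longleftrightarrow> \<not> (\<exists>U V. U \<union> V = UNIV \<and> small a U \<and> small b V)"

definition ent_act :: "('g \<Rightarrow> 'a \<Rightarrow> 'a) \<Rightarrow> 'g \<Rightarrow> 'a uprod set \<Rightarrow> 'a uprod set" where
  "ent_act \<phi> g e = map_uprod (\<phi> g) ` e"

text \<open>Graph distance in Gamma_A (vertex set A, edges between linked entourages);
  infinity if no walk exists.\<close>

definition dA :: "'a uprod set set \<Rightarrow> 'a uprod set \<Rightarrow> 'a uprod set \<Rightarrow> enat" where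
  "dA A a b = (INF n \<in> {n. \<exists>xs. length xs = Suc n \<and> xs ! 0 = a \<and> xs ! n = b \<and>
       set xs \<subseteq> A \<and> (\<forall>i<n. linked (xs ! i) (xs ! Suc i))}. enat n)"

definition nbhd :: "'a uprod set set \<Rightarrow> nat \<Rightarrow> 'a uprod set set \<Rightarrow> 'a uprod set set" where
  "nbhd A d B = {c \<in> A. \<exists>b\<in>B. dA A c b \<le> enat d}"

definition acc_point :: "'a uprod set set \<Rightarrow> 'a::topological_space \<Rightarrow> bool" where
  "acc_point B p \<longleftrightarrow> (\<forall>W. open W \<and> p \<in> W \<longrightarrow> infinite {b \<in> B. small b (- W)})"

definition ent_tendsto :: "(nat \<Rightarrow> 'a uprod set) \<Rightarrow> 'a::topological_space \<Rightarrow> bool" where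
  "ent_tendsto b p \<longleftrightarrow> (\<forall>W. open W \<and> p \<in> W \<longrightarrow> (\<forall>\<^sub>F n in sequentially. small (b n) (- W)))"

end

theory Submission
  imports Defs
begin

locale lev =
  fixes L0 L1 L2 L3 :: "('a \<times> 'a) set" and f :: "'a \<Rightarrow> 'a"
  assumes refl0: "(x,x)\<in>L0"
    and sym0: "(x,y)\<in>L0 \<Longrightarrow> (y,x)\<in>L0"
    and sym1: "(x,y)\<in>L1 \<Longrightarrow> (y,x)\<in>L1"
    and sym2: "(x,y)\<in>L2 \<Longrightarrow> (y,x)\<in>L2"
    and sym3: "(x,y)\<in>L3 \<Longrightarrow> (y,x)\<in>L3"
    and c0: "(x,y)\<in>L0 \<Longrightarrow> (y,z)\<in>L0 \<Longrightarrow> (x,z)\<in>L1"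
    and c1: "(x,y)\<in>L1 \<Longrightarrow> (y,z)\<in>L1 \<Longrightarrow> (x,z)\<in>L2"
    and c2: "(x,y)\<in>L2 \<Longrightarrow> (y,z)\<in>L2 \<Longrightarrow> (x,z)\<in>L3"
    and s01: "L0 \<subseteq> L1" and s12: "L1 \<subseteq> L2" and s23: "L2 \<subseteq> L3"
    and coll: "(x,y)\<notin>L0 \<Longrightarrow> (y,z)\<notin>L0 \<Longrightarrow> (x,z)\<notin>L0 \<Longrightarrow>
               (f x,f y)\<in>L0 \<or> (f y,f z)\<in>L0 \<or> (f x,f z)\<in>L0"
begin

lemma caseI:
  assumes t12: "(t1,t2)\<notin>L3" and t13: "(t1,t3)\<notin>L3" and t23: "(t2,t3)\<notin>L3"
    and w: "f w1 = t1" "f w2 = t2" "f w3 = t3"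
    and w12: "(w1,w2)\<in>L0" and w13: "(w1,w3)\<notin>L1"
    and x: "(w1,x)\<notin>L1" and y: "(w1,y)\<notin>L1"
  shows "(f x, f y)\<in>L2"
proof -
  have T12: "(t1,t2)\<notin>L1" "(t2,t1)\<notin>L1" "(t1,t2)\<notin>L0" "(t2,t1)\<notin>L0"
    using t12 s01 s12 s23 sym3 by blast+
  have T13: "(t1,t3)\<notin>L1" "(t3,t1)\<notin>L1" "(t1,t3)\<notin>L0" "(t3,t1)\<notin>L0"
    using t13 s01 s12 s23 sym3 by blast+
  have T23: "(t2,t3)\<notin>L1" "(t3,t2)\<notin>L1" "(t2,t3)\<notin>L0" "(t3,t2)\<notin>L0"
    using t23 s01 s12 s23 sym3 by blast+
  have claim1: "(f z, t3)\<in>L0" if z1: "(w1,z)\<notin>L1" and z3: "(z,w3)\<notin>L0" for z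
  proof -
    have "(z,w2)\<notin>L0" using z1 w12 c0 sym0 by blast
    moreover have "(w2,w3)\<notin>L0" using w12 w13 c0 by blast
    moreover have "(z,w1)\<notin>L0" using z1 s01 sym0 by blast
    moreover have "(w1,w3)\<notin>L0" using w13 s01 by blast
    ultimately have A: "(f z,t1)\<in>L0 \<or> (f z,t3)\<in>L0" and B: "(f z,t2)\<in>L0 \<or> (f z,t3)\<in>L0"
      using coll[of z w1 w3] coll[of z w2 w3] z3 w T13 T23 by auto
    show ?thesis
    proof (rule ccontr)
      assume "(f z, t3)\<notin>L0"
      with A B have "(f z,t1)\<in>L0" "(f z,t2)\<in>L0" by auto
      then show False using c0 sym0 T12 by blast
    qed
  qed
  have tfree: "\<exists>q. (w1,q)\<notin>L1 \<and> (w3,q)\<notin>L1"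
  proof -
    have n: "\<not>((c,a)\<in>L1 \<and> (c,b)\<in>L1)" if "(a,b)\<notin>L2" for a b c
      using that c1 sym1 by blast
    have "(t1,t2)\<notin>L2" "(t1,t3)\<notin>L2" "(t2,t3)\<notin>L2" using t12 t13 t23 s23 by auto
    then show ?thesis using n[of t1 t2] n[of t1 t3] n[of t2 t3] by blast
  qed
  have claim2: "(f z, t3)\<in>L1" if z1: "(w1,z)\<notin>L1" for z
  proof (cases "(z,w3)\<in>L0")
    case False then show ?thesis using claim1 z1 s01 by blast
  next
    case True
    obtain q where q1: "(w1,q)\<notin>L1" and q3: "(w3,q)\<notin>L1" using tfree by blast
    have "(q,w3)\<notin>L0" using q3 s01 sym0 by blast
    then have fq: "(f q, t3)\<in>L0" using claim1 q1 by blast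
    have zq: "(z,q)\<notin>L0" using True q3 c0 sym0 by blast
    have "(z,w1)\<notin>L0" "(q,w1)\<notin>L0" using z1 q1 s01 sym0 by blast+
    moreover have "(q,w2)\<notin>L0" "(z,w2)\<notin>L0" using q1 z1 w12 c0 sym0 by blast+
    moreover have "(f q, t1)\<notin>L0" "(f q,t2)\<notin>L0" using fq T13 T23 c0 sym0 by blast+
    ultimately have A: "(f z,f q)\<in>L0 \<or> (f z,t1)\<in>L0" and B: "(f z,f q)\<in>L0 \<or> (f z,t2)\<in>L0"
      using coll[of z q w1] coll[of z q w2] zq w by auto
    have "(f z, f q)\<in>L0"
    proof (rule ccontr)
      assume "(f z, f q)\<notin>L0"
      with A B have "(f z,t1)\<in>L0" "(f z,t2)\<in>L0" by auto
      then show False using c0 sym0 T12 by blast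
    qed
    then show ?thesis using fq c0 by blast
  qed
  have "(f x, t3)\<in>L1" "(t3, f y)\<in>L1" using claim2[OF x] claim2[OF y] sym1 by auto
  then show ?thesis by (rule c1)
qed

lemma caseII:
  assumes t12: "(t1,t2)\<notin>L3" and t13: "(t1,t3)\<notin>L3" and t23: "(t2,t3)\<notin>L3"
    and w: "f w1 = t1" "f w2 = t2" "f w3 = t3"
    and w12: "(w1,w2)\<in>L1" and w13: "(w1,w3)\<in>L1"
    and x: "(w1,x)\<notin>L2" and y: "(w1,y)\<notin>L2"
  shows "(f x, f y)\<in>L1"
proof -
  have T: "(t1,t2)\<notin>L1" "(t2,t1)\<notin>L1" "(t1,t3)\<notin>L1" "(t3,t1)\<notin>L1" "(t2,t3)\<notin>L1" "(t3,t2)\<notin>L1"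
    using t12 t13 t23 s12 s23 sym3 by blast+
  have w11: "(w1,w1)\<in>L1"
    using refl0 s01 by blast
  have far: "(u,w1)\<notin>L0 \<and> (u,w2)\<notin>L0 \<and> (u,w3)\<notin>L0" if "(w1,u)\<notin>L2" for u
    using that w11 w12 w13 c1 s01 sym0 by blast
  have one: "\<exists>i\<in>{1,2,3::nat}. (a, [t1,t2,t3]!(i-1))\<notin>L0 \<and> (b,[t1,t2,t3]!(i-1))\<notin>L0" for a b
  proof -
    have n: "\<not>((c,u)\<in>L0 \<and> (c,v)\<in>L0)" if "(u,v)\<notin>L1" for u v c
      using that c0 sym0 by blast
    show ?thesis using n[OF T(1)] n[OF T(3)] n[OF T(5)] by (auto simp: numeral_eq_Suc)
  qed
  show ?thesis
  proof (cases "(x,y)\<in>L0")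
    case False
    show ?thesis
    proof (rule ccontr)
      assume nf: "(f x, f y)\<notin>L1"
      then have nf0: "(f x, f y)\<notin>L0" using s01 by blast
      have "(f x,t1)\<in>L0 \<or> (f y,t1)\<in>L0" "(f x,t2)\<in>L0 \<or> (f y,t2)\<in>L0" "(f x,t3)\<in>L0 \<or> (f y,t3)\<in>L0"
        using coll[of x y w1] coll[of x y w2] coll[of x y w3] far[OF x] far[OF y] False nf0 w sym0
        by blast+
      then show False using T c0 sym0 by blast
    qed
  next
    case True
    have "\<exists>q. (x,q)\<notin>L1 \<and> (w1,q)\<notin>L2"
    proof -
      have n1: "\<not>((x,a)\<in>L1 \<and> (x,b)\<in>L1)" if "(a,b)\<notin>L2" for a b
        using that c1 sym1 by blast
      have n2: "\<not>((w1,a)\<in>L2 \<and> (w1,b)\<in>L2)" if "(a,b)\<notin>L3" for a b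
        using that c2 sym2 by blast
      have "(t1,t2)\<notin>L2" "(t1,t3)\<notin>L2" "(t2,t3)\<notin>L2" using t12 t13 t23 s23 by auto
      then show ?thesis using n1[of t1 t2] n1[of t1 t3] n1[of t2 t3] n2[OF t12] n2[OF t13] n2[OF t23] by blast
    qed
    then obtain q where xq: "(x,q)\<notin>L1" and q1: "(w1,q)\<notin>L2" by blast
    have key: "(f u, f q)\<in>L0" if uq: "(u,q)\<notin>L0" and u1: "(w1,u)\<notin>L2" for u
    proof -
      obtain i where i: "i\<in>{1,2,3::nat}" "(f u, [t1,t2,t3]!(i-1))\<notin>L0" "(f q,[t1,t2,t3]!(i-1))\<notin>L0"
        using one by blast
      have "(f u, t1)\<in>L0 \<or> (t1, f q)\<in>L0 \<or> (f u,f q)\<in>L0"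
           "(f u, t2)\<in>L0 \<or> (t2, f q)\<in>L0 \<or> (f u,f q)\<in>L0"
           "(f u, t3)\<in>L0 \<or> (t3, f q)\<in>L0 \<or> (f u,f q)\<in>L0"
        using coll[of u w1 q] coll[of u w2 q] coll[of u w3 q] far[OF u1] far[OF q1] uq w sym0 by blast+
      then show ?thesis using i sym0 by auto
    qed
    have "(x,q)\<notin>L0" using xq s01 by blast
    moreover have "(y,q)\<notin>L0" using True xq c0 by blast
    ultimately have "(f x, f q)\<in>L0" "(f y,f q)\<in>L0" using key x y by blast+
    then show ?thesis using c0 sym0 by blast
  qed
qed

lemma mainC:
  assumes t12: "(t1,t2)\<notin>L3" and t13: "(t1,t3)\<notin>L3" and t23: "(t2,t3)\<notin>L3"
    and w: "f w1 = t1" "f w2 = t2" "f w3 = t3"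
    and w12: "(w1,w2)\<in>L0"
  shows "\<exists>s. \<forall>x y. (s,x)\<notin>L2 \<longrightarrow> (s,y)\<notin>L2 \<longrightarrow> (f x, f y)\<in>L2"
proof (cases "(w1,w3)\<in>L1")
  case True
  have "(w1,w2)\<in>L1" using w12 s01 by blast
  then show ?thesis using caseII[OF t12 t13 t23 w _ True] s12 by blast
next
  case False
  show ?thesis using caseI[OF t12 t13 t23 w w12 False] s12 by blast
qed

lemma mainC3:
  assumes t12: "(t1,t2)\<notin>L3" and t13: "(t1,t3)\<notin>L3" and t23: "(t2,t3)\<notin>L3"
    and w: "f w1 = t1" "f w2 = t2" "f w3 = t3"
  shows "\<exists>s. \<forall>x y. (s,x)\<notin>L2 \<longrightarrow> (s,y)\<notin>L2 \<longrightarrow> (f x, f y)\<in>L2"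
proof -
  have T: "(t1,t2)\<notin>L0" "(t2,t3)\<notin>L0" "(t1,t3)\<notin>L0"
    using t12 t13 t23 s01 s12 s23 by blast+
  have "(w1,w2)\<in>L0 \<or> (w2,w3)\<in>L0 \<or> (w1,w3)\<in>L0"
    using coll[of w1 w2 w3] w T by auto
  moreover have t32: "(t3,t2)\<notin>L3" "(t2,t1)\<notin>L3" "(t3,t1)\<notin>L3" using t23 t12 t13 sym3 by blast+
  ultimately show ?thesis
    using mainC[OF t12 t13 t23 w] mainC[OF t13 t12 t32(1) w(1) w(3) w(2)]
      mainC[OF t23 t32(2) t32(3) w(2) w(3) w(1)] by blast
qed

end


lemma sep_pc:
  fixes S :: "'a::t2_space set"
  assumes "compact S" "y \<notin> S"
  shows "\<exists>U V. open U \<and> open V \<and> y \<in> U \<and> S \<subseteq> V \<and> U \<inter> V = {}"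
proof -
  let ?C = "{u. open u \<and> eventually (\<lambda>z. z \<notin> u) (nhds y)}"
  have "S \<subseteq> \<Union>?C"
  proof
    fix x assume "x \<in> S"
    with assms have "x \<noteq> y" by auto
    then obtain u v where "open u" "open v" "x \<in> u" "y \<in> v" "u \<inter> v = {}"
      by (metis separation_t2)
    then show "x \<in> \<Union>?C" unfolding eventually_nhds by auto
  qed
  then obtain D where "D \<subseteq> ?C" and "finite D" and "S \<subseteq> \<Union>D"
    by (rule compactE [OF \<open>compact S\<close>]) auto
  from \<open>D \<subseteq> ?C\<close> have "\<forall>x\<in>D. eventually (\<lambda>z. z \<notin> x) (nhds y)" by auto
  with \<open>finite D\<close> have "eventually (\<lambda>z. z \<notin> \<Union>D) (nhds y)"
    by (simp add: eventually_ball_finite)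
  then obtain U where "open U" "y \<in> U" "\<forall>z\<in>U. z \<notin> \<Union>D"
    unfolding eventually_nhds by auto
  moreover have "open (\<Union>D)" using \<open>D \<subseteq> ?C\<close> by auto
  ultimately show ?thesis using \<open>S \<subseteq> \<Union>D\<close> by blast
qed

lemma regular_pt:
  fixes P :: "'a::t2_space set"
  assumes cU: "compact (UNIV::'a set)" and "open P" "a \<in> P"
  shows "\<exists>P'. open P' \<and> a \<in> P' \<and> closure P' \<subseteq> P"
proof -
  have "compact (UNIV - P)" using cU assms(2) by (rule compact_diff)
  then obtain U V where UV: "open U" "open V" "a \<in> U" "UNIV - P \<subseteq> V" "U \<inter> V = {}"
    using sep_pc[of "UNIV - P" a] assms by auto
  have "closure U \<subseteq> - V"
    using UV by (intro closure_minimal) (auto simp: closed_Compl)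
  then show ?thesis using UV by blast
qed

definition nd :: "('a::topological_space \<times> 'a) set \<Rightarrow> bool" where
  "nd N \<longleftrightarrow> open N \<and> (\<forall>x. (x,x) \<in> N)"

definition symr :: "('a \<times> 'a) set \<Rightarrow> bool" where
  "symr N \<longleftrightarrow> (\<forall>x y. (x,y) \<in> N \<longrightarrow> (y,x) \<in> N)"

lemma local_sep:
  fixes a b :: "'a::t2_space"
  assumes cU: "compact (UNIV::'a set)" and ab: "a \<noteq> b"
  shows "\<exists>M Ob. nd M \<and> symr M \<and> open Ob \<and> (a,b) \<in> Ob \<and>
     (\<forall>x y z. (x,y) \<in> Ob \<longrightarrow> (x,z) \<in> M \<longrightarrow> (z,y) \<notin> M)"
proof -
  obtain P Q where PQ: "open P" "open Q" "a \<in> P" "b \<in> Q" "P \<inter> Q = {}"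
    using ab by (metis separation_t2)
  obtain P' where P': "open P'" "a \<in> P'" "closure P' \<subseteq> P" using regular_pt[OF cU PQ(1,3)] by blast
  obtain Q' where Q': "open Q'" "b \<in> Q'" "closure Q' \<subseteq> Q" using regular_pt[OF cU PQ(2,4)] by blast
  define R where "R = - closure P' \<inter> - closure Q'"
  have oR: "open R" unfolding R_def by auto
  define M where "M = (P \<times> P) \<union> (Q \<times> Q) \<union> (R \<times> R)"
  have "nd M" unfolding nd_def M_def using PQ oR P' Q' R_def
    by (auto intro!: open_Times open_Un)
  moreover have "symr M" unfolding symr_def M_def by auto
  moreover have "open (P' \<times> Q')" using P' Q' by (simp add: open_Times)
  moreover have "(a,b) \<in> P' \<times> Q'" using P' Q' by auto
  moreover have "\<forall>x y z. (x,y) \<in> P' \<times> Q' \<longrightarrow> (x,z) \<in> M \<longrightarrow> (z,y) \<notin> M"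
  proof (intro allI impI)
    fix x y z assume xy: "(x,y) \<in> P' \<times> Q'" and xz: "(x,z) \<in> M"
    have x: "x \<in> P" "x \<notin> Q" "x \<notin> R" using xy P' PQ(5) closure_subset[of P'] R_def by auto
    have y: "y \<in> Q" "y \<notin> P" "y \<notin> R" using xy Q' PQ(5) closure_subset[of Q'] R_def by auto
    have "z \<in> P" using xz x unfolding M_def by auto
    then show "(z,y) \<notin> M" using y PQ(5) unfolding M_def by auto
  qed
  ultimately show ?thesis by blast
qed

lemma ulemma:
  fixes N :: "('a::t2_space \<times> 'a) set"
  assumes cU: "compact (UNIV::'a set)" and N: "nd N"
  shows "\<exists>L. nd L \<and> symr L \<and> (\<forall>x y z. (x,y) \<in> L \<longrightarrow> (y,z) \<in> L \<longrightarrow> (x,z) \<in> N)"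
proof -
  have cC: "compact (- N)"
  proof -
    have "compact ((UNIV::'a set) \<times> (UNIV::'a set))" by (intro compact_Times cU)
    moreover have "closed (- N)" using N unfolding nd_def by auto
    ultimately show ?thesis using compact_Int_closed[of "UNIV \<times> UNIV" "- N"] by simp
  qed
  have "\<forall>t \<in> - N. \<exists>M Ob. nd M \<and> symr M \<and> open Ob \<and> t \<in> Ob \<and>
     (\<forall>x y z. (x,y) \<in> Ob \<longrightarrow> (x,z) \<in> M \<longrightarrow> (z,y) \<notin> M)"
  proof
    fix t assume "t \<in> - N"
    then obtain a b where t: "t = (a,b)" "a \<noteq> b" using N unfolding nd_def by (cases t) auto
    show "\<exists>M Ob. nd M \<and> symr M \<and> open Ob \<and> t \<in> Ob \<and>
     (\<forall>x y z. (x,y) \<in> Ob \<longrightarrow> (x,z) \<in> M \<longrightarrow> (z,y) \<notin> M)"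
      using local_sep[OF cU t(2)] t(1) by auto
  qed
  then obtain Mf Of where MO: "\<And>t. t \<in> - N \<Longrightarrow> nd (Mf t) \<and> symr (Mf t) \<and> open (Of t) \<and> t \<in> Of t \<and>
     (\<forall>x y z. (x,y) \<in> Of t \<longrightarrow> (x,z) \<in> Mf t \<longrightarrow> (z,y) \<notin> Mf t)"
    by metis
  obtain D where D: "D \<subseteq> - N" "finite D" "- N \<subseteq> (\<Union>t\<in>D. Of t)"
    using compactE_image[OF cC, of "- N" Of] MO by blast
  define L where "L = (\<Inter>t\<in>D. Mf t)"
  have MO1: "\<And>t. t \<in> D \<Longrightarrow> open (Mf t)" "\<And>t x. t \<in> D \<Longrightarrow> (x,x) \<in> Mf t"
    "\<And>t x y. t \<in> D \<Longrightarrow> (x,y) \<in> Mf t \<Longrightarrow> (y,x) \<in> Mf t"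
    using D(1) MO unfolding nd_def symr_def by blast+
  have "open L" unfolding L_def using D(2) MO1(1) by (intro open_INT) auto
  moreover have "\<forall>x. (x,x) \<in> L" unfolding L_def using MO1(2) by blast
  ultimately have "nd L" unfolding nd_def by blast
  moreover have "symr L" unfolding symr_def
  proof (intro allI impI)
    fix x y assume "(x,y) \<in> L"
    then show "(y,x) \<in> L" unfolding L_def using MO1(3) by auto
  qed
  moreover have "\<forall>x y z. (x,y) \<in> L \<longrightarrow> (y,z) \<in> L \<longrightarrow> (x,z) \<in> N"
  proof (intro allI impI, rule ccontr)
    fix x y z assume "(x,y) \<in> L" "(y,z) \<in> L" "(x,z) \<notin> N"
    then obtain t where "t \<in> D" "(x,z) \<in> Of t" using D by blast
    moreover have "(x,y) \<in> Mf t" "(y,z) \<in> Mf t" using \<open>(x,y) \<in> L\<close> \<open>(y,z) \<in> L\<close> \<open>t \<in> D\<close> L_def by auto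
    moreover have "t \<in> - N" using \<open>t \<in> D\<close> D(1) by blast
    ultimately show False using MO[of t] by blast
  qed
  ultimately show ?thesis by blast
qed

lemma nd_sub: "nd L \<Longrightarrow> (\<forall>x y z. (x,y) \<in> L \<longrightarrow> (y,z) \<in> L \<longrightarrow> (x,z) \<in> N) \<Longrightarrow> L \<subseteq> N"
  unfolding nd_def by auto

lemma levels:
  fixes N :: "('a::t2_space \<times> 'a) set"
  assumes cU: "compact (UNIV::'a set)" and N: "nd N"
  shows "\<exists>L0 L1 L2 L3. nd L0 \<and> nd L1 \<and> nd L2 \<and> nd L3 \<and> symr L0 \<and> symr L1 \<and> symr L2 \<and> symr L3 \<and>
    (\<forall>x y z. (x,y) \<in> L0 \<longrightarrow> (y,z) \<in> L0 \<longrightarrow> (x,z) \<in> L1) \<and>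
    (\<forall>x y z. (x,y) \<in> L1 \<longrightarrow> (y,z) \<in> L1 \<longrightarrow> (x,z) \<in> L2) \<and>
    (\<forall>x y z. (x,y) \<in> L2 \<longrightarrow> (y,z) \<in> L2 \<longrightarrow> (x,z) \<in> L3) \<and>
    L0 \<subseteq> L1 \<and> L1 \<subseteq> L2 \<and> L2 \<subseteq> L3 \<and> L3 \<subseteq> N"
proof -
  obtain L3 where 3: "nd L3" "symr L3" "\<forall>x y z. (x,y) \<in> L3 \<longrightarrow> (y,z) \<in> L3 \<longrightarrow> (x,z) \<in> N"
    using ulemma[OF cU N] by blast
  obtain L2 where 2: "nd L2" "symr L2" "\<forall>x y z. (x,y) \<in> L2 \<longrightarrow> (y,z) \<in> L2 \<longrightarrow> (x,z) \<in> L3"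
    using ulemma[OF cU 3(1)] by blast
  obtain L1 where 1: "nd L1" "symr L1" "\<forall>x y z. (x,y) \<in> L1 \<longrightarrow> (y,z) \<in> L1 \<longrightarrow> (x,z) \<in> L2"
    using ulemma[OF cU 2(1)] by blast
  obtain L0 where 0: "nd L0" "symr L0" "\<forall>x y z. (x,y) \<in> L0 \<longrightarrow> (y,z) \<in> L0 \<longrightarrow> (x,z) \<in> L1"
    using ulemma[OF cU 1(1)] by blast
  show ?thesis using 0 1 2 3 nd_sub[OF 0(1) 0(3)] nd_sub[OF 1(1) 1(3)] nd_sub[OF 2(1) 2(3)] nd_sub[OF 3(1) 3(3)]
    by blast
qed

lemma mid:
  fixes W :: "'a::t2_space set"
  assumes cU: "compact (UNIV::'a set)" and W: "open W" "p \<in> W"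
  shows "\<exists>Ov v. open Ov \<and> p \<in> Ov \<and> Ov \<subseteq> W \<and> nd v \<and> symr v \<and>
     (\<forall>q\<in>Ov. \<forall>s y. (q,s) \<in> v \<longrightarrow> (s,y) \<in> v \<longrightarrow> y \<in> W)"
proof -
  define N where "N = (W \<times> W) \<union> ((- {p}) \<times> (- {p}))"
  have "nd N" unfolding nd_def N_def using W by (auto intro!: open_Un open_Times)
  then obtain L2 where 2: "nd L2" "symr L2" "\<forall>x y z. (x,y) \<in> L2 \<longrightarrow> (y,z) \<in> L2 \<longrightarrow> (x,z) \<in> N"
    using ulemma[OF cU] by blast
  obtain L1 where 1: "nd L1" "symr L1" "\<forall>x y z. (x,y) \<in> L1 \<longrightarrow> (y,z) \<in> L1 \<longrightarrow> (x,z) \<in> L2"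
    using ulemma[OF cU 2(1)] by blast
  have s12: "L1 \<subseteq> L2" by (rule nd_sub[OF 1(1) 1(3)])
  define Ov where "Ov = Pair p -` L1"
  have "open Ov" unfolding Ov_def using 1(1) unfolding nd_def
    by (intro continuous_open_vimage) (auto intro!: continuous_intros)
  moreover have "p \<in> Ov" using 1(1) unfolding Ov_def nd_def by auto
  moreover have key: "\<forall>q\<in>Ov. \<forall>s y. (q,s) \<in> L1 \<longrightarrow> (s,y) \<in> L1 \<longrightarrow> y \<in> W"
  proof (intro ballI allI impI)
    fix q s y assume "q \<in> Ov" "(q,s) \<in> L1" "(s,y) \<in> L1"
    then have "(p,s) \<in> L2" "(s,y) \<in> L2" using 1(3) s12 unfolding Ov_def by auto
    then have "(p,y) \<in> N" using 2(3) by blast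
    then show "y \<in> W" unfolding N_def by auto
  qed
  moreover have "Ov \<subseteq> W"
  proof
    fix q assume "q \<in> Ov"
    moreover have "(p,p) \<in> L1" "(q,q) \<in> L1" using 1(1) unfolding nd_def by auto
    ultimately show "q \<in> W" using key unfolding Ov_def by auto
  qed
  ultimately show ?thesis using 1 by blast
qed


lemma istop3: "istopology (\<lambda>W. W \<subseteq> {S. card S = 3} \<and>
      open {(x::'a::topological_space, y, z). x \<noteq> y \<and> y \<noteq> z \<and> x \<noteq> z \<and> {x, y, z} \<in> W})"
  unfolding istopology_def
proof (rule conjI; intro allI impI)
  fix S T :: "'a set set"
  assume a: "S \<subseteq> {S. card S = 3} \<and> open {(x, y, z). x \<noteq> y \<and> y \<noteq> z \<and> x \<noteq> z \<and> {x, y, z} \<in> S}"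
     and b: "T \<subseteq> {S. card S = 3} \<and> open {(x, y, z). x \<noteq> y \<and> y \<noteq> z \<and> x \<noteq> z \<and> {x, y, z} \<in> T}"
  have "{(x, y, z). x \<noteq> y \<and> y \<noteq> z \<and> x \<noteq> z \<and> {x, y, z} \<in> S \<inter> T} =
        {(x, y, z). x \<noteq> y \<and> y \<noteq> z \<and> x \<noteq> z \<and> {x, y, z} \<in> S} \<inter> {(x, y, z). x \<noteq> y \<and> y \<noteq> z \<and> x \<noteq> z \<and> {x, y, z} \<in> T}"
    by blast
  moreover have "open ({(x, y, z). x \<noteq> y \<and> y \<noteq> z \<and> x \<noteq> z \<and> {x, y, z} \<in> S} \<inter> {(x, y, z). x \<noteq> y \<and> y \<noteq> z \<and> x \<noteq> z \<and> {x, y, z} \<in> T})"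
    using a b by (intro open_Int) simp_all
  moreover have "S \<inter> T \<subseteq> {S. card S = 3}" using a by blast
  ultimately show "S \<inter> T \<subseteq> {S. card S = 3} \<and> open {(x, y, z). x \<noteq> y \<and> y \<noteq> z \<and> x \<noteq> z \<and> {x, y, z} \<in> S \<inter> T}"
    by simp
next
  fix K :: "'a set set set"
  assume a: "\<forall>W\<in>K. W \<subseteq> {S. card S = 3} \<and> open {(x, y, z). x \<noteq> y \<and> y \<noteq> z \<and> x \<noteq> z \<and> {x, y, z} \<in> W}"
  have "{(x, y, z). x \<noteq> y \<and> y \<noteq> z \<and> x \<noteq> z \<and> {x, y, z} \<in> \<Union>K} =
       (\<Union>W\<in>K. {(x, y, z). x \<noteq> y \<and> y \<noteq> z \<and> x \<noteq> z \<and> {x, y, z} \<in> W})" by blast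
  moreover have "open (\<Union>W\<in>K. {(x, y, z). x \<noteq> y \<and> y \<noteq> z \<and> x \<noteq> z \<and> {x, y, z} \<in> W})"
    using a by (intro open_UN) simp
  moreover have "\<Union>K \<subseteq> {S. card S = 3}" using a by blast
  ultimately show "\<Union>K \<subseteq> {S. card S = 3} \<and> open {(x, y, z). x \<noteq> y \<and> y \<noteq> z \<and> x \<noteq> z \<and> {x, y, z} \<in> \<Union>K}"
    by simp
qed

lemma openin3: "openin theta3_top W \<longleftrightarrow> W \<subseteq> {S. card S = 3} \<and>
      open {(x::'a::topological_space, y, z). x \<noteq> y \<and> y \<noteq> z \<and> x \<noteq> z \<and> {x, y, z} \<in> W}"
  unfolding theta3_top_def by (subst topology_inverse'[OF istop3]) (rule refl)

lemma istop2: "istopology (\<lambda>V. open {(x::'a::topological_space, y). Upair x y \<in> V})"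
  unfolding istopology_def
proof (intro conjI allI impI)
  fix S T :: "'a uprod set"
  assume "open {(x, y). Upair x y \<in> S}" "open {(x, y). Upair x y \<in> T}"
  moreover have "{(x, y). Upair x y \<in> S \<inter> T} = {(x, y). Upair x y \<in> S} \<inter> {(x, y). Upair x y \<in> T}" by auto
  ultimately show "open {(x, y). Upair x y \<in> S \<inter> T}" by auto
next
  fix K :: "'a uprod set set"
  assume a: "\<forall>V\<in>K. open {(x, y). Upair x y \<in> V}"
  have "{(x, y). Upair x y \<in> \<Union>K} = (\<Union>V\<in>K. {(x, y). Upair x y \<in> V})" by auto
  then show "open {(x, y). Upair x y \<in> \<Union>K}" using a by (auto intro!: open_UN)
qed

lemma openin2: "openin s2_top V \<longleftrightarrow> open {(x::'a::topological_space, y). Upair x y \<in> V}"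
  unfolding s2_top_def by (subst topology_inverse'[OF istop2]) (rule refl)

lemma open_distinct3: "open {(x::'a::t2_space, y, z). x \<noteq> y \<and> y \<noteq> z \<and> x \<noteq> z}"
proof -
  have c1: "closed {p::'a\<times>'a\<times>'a. fst p = fst (snd p)}"
    by (intro closed_Collect_eq continuous_intros)
  have c2: "closed {p::'a\<times>'a\<times>'a. fst (snd p) = snd (snd p)}"
    by (intro closed_Collect_eq continuous_intros)
  have c3: "closed {p::'a\<times>'a\<times>'a. fst p = snd (snd p)}"
    by (intro closed_Collect_eq continuous_intros)
  have "{(x::'a, y, z). x \<noteq> y \<and> y \<noteq> z \<and> x \<noteq> z} =
     - ({p. fst p = fst (snd p)} \<union> {p. fst (snd p) = snd (snd p)} \<union> {p. fst p = snd (snd p)})"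
    by auto
  then show ?thesis using c1 c2 c3 by (simp add: open_Compl closed_Un open_Int)
qed

lemma topspace3: "topspace (theta3_top :: 'a::t2_space set topology) = {S. card S = 3}"
proof -
  have "openin (theta3_top :: 'a set topology) {S. card S = 3}"
  proof -
    have "{(x::'a, y, z). x \<noteq> y \<and> y \<noteq> z \<and> x \<noteq> z \<and> {x, y, z} \<in> {S. card S = 3}} =
          {(x::'a, y, z). x \<noteq> y \<and> y \<noteq> z \<and> x \<noteq> z}" by auto
    then show ?thesis unfolding openin3 using open_distinct3 by auto
  qed
  then have "{S. card S = 3} \<subseteq> topspace (theta3_top :: 'a set topology)" by (rule openin_subset)
  moreover have "topspace (theta3_top :: 'a set topology) \<subseteq> {S. card S = 3}"
    unfolding topspace_def openin3 by blast
  ultimately show ?thesis by blast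
qed

definition Kof :: "('a \<times> 'a) set \<Rightarrow> 'a set set" where
  "Kof L = (\<lambda>(x,y,z). {x,y,z}) ` {(x,y,z). (x,y) \<notin> L \<and> (y,z) \<notin> L \<and> (x,z) \<notin> L}"

lemma compact_Kof:
  fixes L :: "('a::t2_space \<times> 'a) set"
  assumes cU: "compact (UNIV::'a set)" and L: "nd L"
  shows "compactin theta3_top (Kof L)"
proof -
  define D where "D = {(x::'a, y, z). x \<noteq> y \<and> y \<noteq> z \<and> x \<noteq> z}"
  define C where "C = {(x::'a,y,z). (x,y) \<notin> L \<and> (y,z) \<notin> L \<and> (x,z) \<notin> L}"
  have cl: "closed C"
  proof -
    have h1: "closed ((\<lambda>p. (fst p, fst (snd p))) -` (- L))"
      by (rule closed_vimage) (use L in \<open>auto simp: nd_def intro!: continuous_intros\<close>)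
    have h2: "closed ((\<lambda>p. (fst (snd p), snd (snd p))) -` (- L))"
      by (rule closed_vimage) (use L in \<open>auto simp: nd_def intro!: continuous_intros\<close>)
    have h3: "closed ((\<lambda>p. (fst p, snd (snd p))) -` (- L))"
      by (rule closed_vimage) (use L in \<open>auto simp: nd_def intro!: continuous_intros\<close>)
    have eq: "C = ((\<lambda>p. (fst p, fst (snd p))) -` (- L)) \<inter> ((\<lambda>p. (fst (snd p), snd (snd p))) -` (- L))
        \<inter> ((\<lambda>p. (fst p, snd (snd p))) -` (- L))" unfolding C_def by auto
    show ?thesis unfolding eq by (intro closed_Int h1 h2 h3)
  qed
  have "compact ((UNIV::'a set) \<times> (UNIV::'a set) \<times> (UNIV::'a set))"
    by (intro compact_Times cU)
  then have cC: "compact C" using compact_Int_closed[OF _ cl] by fastforce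
  have CD: "C \<subseteq> D" unfolding C_def D_def using L unfolding nd_def by auto
  have "compactin (subtopology euclidean D) C" using cC CD by (simp add: compactin_subtopology)
  moreover have "continuous_map (subtopology euclidean D) theta3_top (\<lambda>(x,y,z). {x,y,z})"
    unfolding continuous_map_def
  proof (intro conjI allI impI funcsetI)
    fix t assume "t \<in> topspace (subtopology euclidean D)"
    then show "(\<lambda>(x,y,z). {x,y,z}) t \<in> topspace theta3_top"
      unfolding topspace3 D_def by (auto simp: card_insert_if)
  next
    fix U :: "'a set set" assume "openin theta3_top U"
    then have oU: "open {(x, y, z). x \<noteq> y \<and> y \<noteq> z \<and> x \<noteq> z \<and> {x, y, z} \<in> U}" unfolding openin3 by blast
    have "{t \<in> topspace (subtopology euclidean D). (\<lambda>(x,y,z). {x,y,z}) t \<in> U} =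
          D \<inter> {(x, y, z). x \<noteq> y \<and> y \<noteq> z \<and> x \<noteq> z \<and> {x, y, z} \<in> U}"
      unfolding D_def by auto
    then show "openin (subtopology euclidean D) {t \<in> topspace (subtopology euclidean D). (\<lambda>(x,y,z). {x,y,z}) t \<in> U}"
      using oU by (simp add: openin_open_Int)
  qed
  ultimately have "compactin theta3_top ((\<lambda>(x,y,z). {x,y,z}) ` C)" by (rule image_compactin)
  then show ?thesis unfolding Kof_def C_def by simp
qed


locale ctx =
  fixes G :: "('g, 'b) monoid_scheme" and \<phi> :: "'g \<Rightarrow> 'a::t2_space \<Rightarrow> 'a" and a0 :: "'a uprod set"
  assumes cpt: "compactum_type TYPE('a)" and ha: "homeo_action G \<phi>"
    and td: "three_discontinuous G \<phi>" and ent: "entourage a0" and lk: "linked a0 a0"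
begin

definition AA where "AA = {ent_act \<phi> g a0 | g. g \<in> carrier G}"

lemma cU: "compact (UNIV::'a set)" using cpt unfolding compactum_type_def by blast
lemma three: "\<exists>x y z::'a. x\<noteq>y \<and> y\<noteq>z \<and> x\<noteq>z" using cpt unfolding compactum_type_def by blast

lemma ga: "group_action G UNIV \<phi>" using ha unfolding homeo_action_def by blast
lemma grp: "group G" using ga unfolding group_action_def group_hom_def by blast
lemma cont: "g \<in> carrier G \<Longrightarrow> continuous_on UNIV (\<phi> g)" using ha unfolding homeo_action_def by blast

lemma inv1: assumes g: "g \<in> carrier G" shows "\<phi> (inv\<^bsub>G\<^esub> g) (\<phi> g x) = x"
proof -
  have ig: "inv\<^bsub>G\<^esub> g \<in> carrier G" using g grp by (simp add: group.inv_closed)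
  have "\<phi> (inv\<^bsub>G\<^esub> g) (\<phi> g x) = \<phi> (inv\<^bsub>G\<^esub> g \<otimes>\<^bsub>G\<^esub> g) x"
    using group_action.composition_rule[OF ga, of x "inv\<^bsub>G\<^esub> g" g] ig g by simp
  also have "\<dots> = \<phi> \<one>\<^bsub>G\<^esub> x" using g grp by (simp add: group.l_inv)
  also have "\<dots> = x" using group_action.id_eq_one[OF ga] by (metis UNIV_I restrict_apply')
  finally show ?thesis .
qed

lemma inv2: assumes g: "g \<in> carrier G" shows "\<phi> g (\<phi> (inv\<^bsub>G\<^esub> g) x) = x"
proof -
  have ig: "inv\<^bsub>G\<^esub> g \<in> carrier G" using g grp by (simp add: group.inv_closed)
  have "inv\<^bsub>G\<^esub> (inv\<^bsub>G\<^esub> g) = g" using g grp by (simp add: group.inv_inv)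
  then show ?thesis using inv1[OF ig, of x] by simp
qed

lemma invc: "g \<in> carrier G \<Longrightarrow> inv\<^bsub>G\<^esub> g \<in> carrier G" using grp by (simp add: group.inv_closed)
lemma invinv: "g \<in> carrier G \<Longrightarrow> inv\<^bsub>G\<^esub> (inv\<^bsub>G\<^esub> g) = g" using grp by (simp add: group.inv_inv)

lemma Upair_com: "Upair a b = Upair b a" by simp

lemma mem_act:
  assumes g: "g \<in> carrier G"
  shows "Upair x y \<in> ent_act \<phi> g e \<longleftrightarrow> Upair (\<phi> (inv\<^bsub>G\<^esub> g) x) (\<phi> (inv\<^bsub>G\<^esub> g) y) \<in> e"
proof
  assume "Upair x y \<in> ent_act \<phi> g e"
  then obtain u where u: "u \<in> e" "Upair x y = map_uprod (\<phi> g) u" unfolding ent_act_def by blast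
  obtain a b where ab: "u = Upair a b" by (cases u)
  have "(x = \<phi> g a \<and> y = \<phi> g b) \<or> (x = \<phi> g b \<and> y = \<phi> g a)" using u(2) ab by auto
  then show "Upair (\<phi> (inv\<^bsub>G\<^esub> g) x) (\<phi> (inv\<^bsub>G\<^esub> g) y) \<in> e"
    using inv1[OF g] u(1) ab Upair_com by metis
next
  assume "Upair (\<phi> (inv\<^bsub>G\<^esub> g) x) (\<phi> (inv\<^bsub>G\<^esub> g) y) \<in> e"
  moreover have "map_uprod (\<phi> g) (Upair (\<phi> (inv\<^bsub>G\<^esub> g) x) (\<phi> (inv\<^bsub>G\<^esub> g) y)) = Upair x y"
    using inv2[OF g] by simp
  ultimately show "Upair x y \<in> ent_act \<phi> g e" unfolding ent_act_def by (metis image_eqI)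
qed

lemma small_act:
  assumes g: "g \<in> carrier G"
  shows "small (ent_act \<phi> g e) U \<longleftrightarrow> small e (\<phi> (inv\<^bsub>G\<^esub> g) ` U)"
  unfolding small_def using mem_act[OF g] by auto

lemma surjg: "g \<in> carrier G \<Longrightarrow> \<phi> g ` UNIV = UNIV"
  using group_action.surj_prop[OF ga] by blast

lemma linked_sym: "linked a b \<Longrightarrow> linked b a" unfolding linked_def by (metis sup_commute)

lemma linked_A: assumes "a \<in> AA" shows "linked a a"
proof -
  obtain g where g: "g \<in> carrier G" "a = ent_act \<phi> g a0" using assms unfolding AA_def by blast
  show ?thesis unfolding linked_def
  proof
    assume "\<exists>U V. U \<union> V = UNIV \<and> small a U \<and> small a V"
    then obtain U V where UV: "U \<union> V = UNIV" "small a U" "small a V" by blast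
    let ?h = "\<phi> (inv\<^bsub>G\<^esub> g)"
    have "?h ` U \<union> ?h ` V = UNIV" using surjg[OF invc[OF g(1)]] UV(1) by (metis image_Un)
    moreover have "small a0 (?h ` U)" "small a0 (?h ` V)" using UV small_act[OF g(1)] g(2) by auto
    ultimately show False using lk unfolding linked_def by blast
  qed
qed

lemma diag0: "Upair x x \<in> a0" using ent unfolding entourage_def by blast

lemma diag_A: "a \<in> AA \<Longrightarrow> Upair x x \<in> a"
  unfolding AA_def using mem_act diag0 by auto

lemma N0: "\<exists>N0. nd N0 \<and> (\<forall>x y. (x,y) \<in> N0 \<longrightarrow> Upair x y \<in> a0)"
proof -
  obtain V where V: "openin s2_top V" "range (\<lambda>x. Upair x x) \<subseteq> V" "V \<subseteq> a0"
    using ent unfolding entourage_def by blast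
  let ?N = "{(x,y). Upair x y \<in> V}"
  have "nd ?N" unfolding nd_def using V(1,2) openin2 by auto
  then show ?thesis using V(3) by blast
qed

lemma ndA: assumes "a \<in> AA" shows "\<exists>N. nd N \<and> (\<forall>x y. (x,y) \<in> N \<longrightarrow> Upair x y \<in> a)"
proof -
  obtain g where g: "g \<in> carrier G" "a = ent_act \<phi> g a0" using assms unfolding AA_def by blast
  obtain N0 where N0: "nd N0" "\<forall>x y. (x,y) \<in> N0 \<longrightarrow> Upair x y \<in> a0" using N0 by blast
  define h where "h = \<phi> (inv\<^bsub>G\<^esub> g)"
  have hc: "continuous_on UNIV h" unfolding h_def by (rule cont[OF invc[OF g(1)]])
  have "continuous_on UNIV (\<lambda>p. (h (fst p), h (snd p)))"
    by (intro continuous_on_Pair continuous_on_compose2[OF hc] continuous_intros) auto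
  then have "open ((\<lambda>p. (h (fst p), h (snd p))) -` N0)" using N0(1) unfolding nd_def
    by (intro open_vimage) auto
  moreover have "\<forall>x. (x,x) \<in> (\<lambda>p. (h (fst p), h (snd p))) -` N0" using N0(1) unfolding nd_def by auto
  moreover have "\<forall>x y. (x,y) \<in> (\<lambda>p. (h (fst p), h (snd p))) -` N0 \<longrightarrow> Upair x y \<in> a"
    using N0(2) g mem_act unfolding h_def by auto
  ultimately show ?thesis unfolding nd_def by blast
qed

end


context ctx begin

lemma badset:
  assumes v: "nd v"
  shows "finite {a\<in>AA. \<not>(\<exists>s. small a {y. (s,y) \<notin> v})}"
proof -
  obtain t1 t2 t3 :: 'a where t: "t1\<noteq>t2" "t2\<noteq>t3" "t1\<noteq>t3" using three by blast
  obtain N0 where N0: "nd N0" "\<forall>x y. (x,y) \<in> N0 \<longrightarrow> Upair x y \<in> a0" using N0 by blast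
  define F where "F = {(t1,t2),(t2,t1),(t1,t3),(t3,t1),(t2,t3),(t3,t2)}"
  define N where "N = v \<inter> N0 \<inter> - F"
  have "open (- F)" unfolding F_def by (intro open_Compl finite_imp_closed) simp
  then have "open N" using v N0(1) unfolding N_def nd_def by (intro open_Int) auto
  moreover have "\<forall>x. (x,x) \<in> N" using v N0(1) t unfolding N_def nd_def F_def by auto
  ultimately have ndN: "nd N" unfolding nd_def by blast
  obtain L0 L1 L2 L3 where L: "nd L0" "nd L1" "nd L2" "nd L3" "symr L0" "symr L1" "symr L2" "symr L3"
    "\<forall>x y z. (x,y) \<in> L0 \<longrightarrow> (y,z) \<in> L0 \<longrightarrow> (x,z) \<in> L1"
    "\<forall>x y z. (x,y) \<in> L1 \<longrightarrow> (y,z) \<in> L1 \<longrightarrow> (x,z) \<in> L2"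
    "\<forall>x y z. (x,y) \<in> L2 \<longrightarrow> (y,z) \<in> L2 \<longrightarrow> (x,z) \<in> L3"
    "L0 \<subseteq> L1" "L1 \<subseteq> L2" "L2 \<subseteq> L3" "L3 \<subseteq> N"
    using levels[OF cU ndN] by blast
  have tL: "(t1,t2) \<notin> L3" "(t1,t3) \<notin> L3" "(t2,t3) \<notin> L3"
    using L(15) unfolding N_def F_def by auto
  define K where "K = Kof L0"
  have cK: "compactin theta3_top K" unfolding K_def by (rule compact_Kof[OF cU L(1)])
  define Fin where "Fin = {g \<in> carrier G. ((`) (\<phi> g)) ` K \<inter> K \<noteq> {}}"
  have finF: "finite Fin" using td cK unfolding three_discontinuous_def Fin_def by blast
  have claim: "\<exists>s. \<forall>x y. (s,x)\<notin>L2 \<longrightarrow> (s,y)\<notin>L2 \<longrightarrow> (\<phi> g x, \<phi> g y) \<in> L2"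
    if g: "g \<in> carrier G" "g \<notin> Fin" for g
  proof -
    interpret lev L0 L1 L2 L3 "\<phi> g"
    proof
      show "\<And>x. (x,x) \<in> L0" using L(1) unfolding nd_def by blast
      show "\<And>x y. (x, y) \<in> L0 \<Longrightarrow> (y, x) \<in> L0" using L(5) unfolding symr_def by blast
      show "\<And>x y. (x, y) \<in> L1 \<Longrightarrow> (y, x) \<in> L1" using L(6) unfolding symr_def by blast
      show "\<And>x y. (x, y) \<in> L2 \<Longrightarrow> (y, x) \<in> L2" using L(7) unfolding symr_def by blast
      show "\<And>x y. (x, y) \<in> L3 \<Longrightarrow> (y, x) \<in> L3" using L(8) unfolding symr_def by blast
      show "\<And>x y z. (x, y) \<in> L0 \<Longrightarrow> (y, z) \<in> L0 \<Longrightarrow> (x, z) \<in> L1" using L(9) by blast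
      show "\<And>x y z. (x, y) \<in> L1 \<Longrightarrow> (y, z) \<in> L1 \<Longrightarrow> (x, z) \<in> L2" using L(10) by blast
      show "\<And>x y z. (x, y) \<in> L2 \<Longrightarrow> (y, z) \<in> L2 \<Longrightarrow> (x, z) \<in> L3" using L(11) by blast
      show "L0 \<subseteq> L1" "L1 \<subseteq> L2" "L2 \<subseteq> L3" using L by blast+
      fix x y z assume xyz: "(x, y) \<notin> L0" "(y, z) \<notin> L0" "(x, z) \<notin> L0"
      show "(\<phi> g x, \<phi> g y) \<in> L0 \<or> (\<phi> g y, \<phi> g z) \<in> L0 \<or> (\<phi> g x, \<phi> g z) \<in> L0"
      proof (rule ccontr)
        assume "\<not> ?thesis"
        then have img: "{\<phi> g x, \<phi> g y, \<phi> g z} \<in> K" unfolding K_def Kof_def by force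
        have "{x,y,z} \<in> K" using xyz unfolding K_def Kof_def by force
        moreover have "\<phi> g ` {x,y,z} = {\<phi> g x, \<phi> g y, \<phi> g z}" by simp
        ultimately have "((`) (\<phi> g)) ` K \<inter> K \<noteq> {}" using img by (metis IntI empty_iff image_eqI)
        then show False using g unfolding Fin_def by blast
      qed
    qed
    show ?thesis
      by (rule mainC3[OF tL, of "\<phi> (inv\<^bsub>G\<^esub> g) t1" "\<phi> (inv\<^bsub>G\<^esub> g) t2" "\<phi> (inv\<^bsub>G\<^esub> g) t3"])
        (simp_all add: inv2[OF g(1)])
  qed
  have "{a\<in>AA. \<not>(\<exists>s. small a {y. (s,y) \<notin> v})} \<subseteq> (\<lambda>g. ent_act \<phi> (inv\<^bsub>G\<^esub> g) a0) ` Fin"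
  proof
    fix a assume a: "a \<in> {a\<in>AA. \<not>(\<exists>s. small a {y. (s,y) \<notin> v})}"
    then obtain h where h: "h \<in> carrier G" "a = ent_act \<phi> h a0" unfolding AA_def by blast
    have gc: "inv\<^bsub>G\<^esub> h \<in> carrier G" by (rule invc[OF h(1)])
    have "inv\<^bsub>G\<^esub> h \<in> Fin"
    proof (rule ccontr)
      assume "inv\<^bsub>G\<^esub> h \<notin> Fin"
      then obtain s where s: "\<forall>x y. (s,x)\<notin>L2 \<longrightarrow> (s,y)\<notin>L2 \<longrightarrow> (\<phi> (inv\<^bsub>G\<^esub> h) x, \<phi> (inv\<^bsub>G\<^esub> h) y) \<in> L2"
        using claim[OF gc] by blast
      have "L2 \<subseteq> v" using L(13,14,15) unfolding N_def by blast
      moreover have "L2 \<subseteq> N0" using L(13,14,15) unfolding N_def by blast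
      ultimately have "small a {y. (s,y) \<notin> v}"
        unfolding small_def h(2) mem_act[OF h(1)] using s N0(2) by blast
      then show False using a by blast
    qed
    moreover have "a = ent_act \<phi> (inv\<^bsub>G\<^esub> (inv\<^bsub>G\<^esub> h)) a0" using h invinv by simp
    ultimately show "a \<in> (\<lambda>g. ent_act \<phi> (inv\<^bsub>G\<^esub> g) a0) ` Fin" by blast
  qed
  then show ?thesis using finF finite_subset by blast
qed

end


context ctx begin

lemma locfin: assumes a: "a \<in> AA" shows "finite {b\<in>AA. linked a b}"
proof -
  obtain N where N: "nd N" "\<forall>x y. (x,y) \<in> N \<longrightarrow> Upair x y \<in> a" using ndA[OF a] by blast
  obtain L where L: "nd L" "symr L" "\<forall>x y z. (x,y) \<in> L \<longrightarrow> (y,z) \<in> L \<longrightarrow> (x,z) \<in> N"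
    using ulemma[OF cU N(1)] by blast
  have "{b\<in>AA. linked a b} \<subseteq> {a\<in>AA. \<not>(\<exists>s. small a {y. (s,y) \<notin> L})}"
  proof (rule subsetI, rule CollectI, rule conjI)
    fix b assume b: "b \<in> {b\<in>AA. linked a b}"
    then show "b \<in> AA" by blast
    show "\<not>(\<exists>s. small b {y. (s,y) \<notin> L})"
    proof
      assume "\<exists>s. small b {y. (s,y) \<notin> L}"
      then obtain s where s: "small b {y. (s,y) \<notin> L}" by blast
      have "small a {y. (s,y) \<in> L}" unfolding small_def
        using L(2,3) N(2) unfolding symr_def by blast
      moreover have "{y. (s,y) \<in> L} \<union> {y. (s,y) \<notin> L} = UNIV" by blast
      ultimately show False using s b unfolding linked_def by blast
    qed
  qed
  then show ?thesis using badset[OF L(1)] finite_subset by blast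
qed

lemma nbr: assumes "finite X" "X \<subseteq> AA" shows "finite {c\<in>AA. \<exists>x\<in>X. linked c x}"
proof -
  have "{c\<in>AA. \<exists>x\<in>X. linked c x} \<subseteq> (\<Union>x\<in>X. {b\<in>AA. linked x b})" using linked_sym by blast
  moreover have "finite (\<Union>x\<in>X. {b\<in>AA. linked x b})" using assms locfin by blast
  ultimately show ?thesis using finite_subset by blast
qed

lemma small_mono: "small a U \<Longrightarrow> V \<subseteq> U \<Longrightarrow> small a V" unfolding small_def by blast

lemma L2lem:
  assumes W: "open W" "p \<in> W"
  shows "\<exists>Ov E. open Ov \<and> p \<in> Ov \<and> Ov \<subseteq> W \<and> finite E \<and> E \<subseteq> AA \<and>
    (\<forall>c\<in>AA. c \<notin> E \<longrightarrow> small c (- Ov) \<longrightarrow> (\<forall>a\<in>AA. linked a c \<longrightarrow> small a (- W)))"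
proof -
  obtain Ov v where o: "open Ov" "p \<in> Ov" "Ov \<subseteq> W" "nd v" "symr v"
     "\<forall>q\<in>Ov. \<forall>s y. (q,s) \<in> v \<longrightarrow> (s,y) \<in> v \<longrightarrow> y \<in> W"
    using mid[OF cU W] by blast
  define E0 where "E0 = {a\<in>AA. \<not>(\<exists>s. small a {y. (s,y) \<notin> v})}"
  define E where "E = E0 \<union> {c\<in>AA. \<exists>x\<in>E0. linked c x}"
  have fE0: "finite E0" unfolding E0_def by (rule badset[OF o(4)])
  have "E0 \<subseteq> AA" unfolding E0_def by blast
  then have fE: "finite E" "E \<subseteq> AA" unfolding E_def using fE0 nbr by auto
  have "\<forall>c\<in>AA. c \<notin> E \<longrightarrow> small c (- Ov) \<longrightarrow> (\<forall>a\<in>AA. linked a c \<longrightarrow> small a (- W))"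
  proof (intro ballI impI)
    fix c a assume c: "c \<in> AA" "c \<notin> E" "small c (- Ov)" and a: "a \<in> AA" "linked a c"
    have "a \<notin> E0" using c a linked_sym unfolding E_def by blast
    then obtain s where s: "small a {y. (s,y) \<notin> v}" using a unfolding E0_def by blast
    show "small a (- W)"
    proof (cases "\<exists>q\<in>Ov. (s,q) \<in> v")
      case True
      then obtain q where q: "q \<in> Ov" "(s,q) \<in> v" by blast
      have "(q,s) \<in> v" using q(2) o(5) unfolding symr_def by blast
      then have "- W \<subseteq> {y. (s,y) \<notin> v}" using o(6) q(1) by blast
      then show ?thesis using s small_mono by blast
    next
      case False
      then have "small a Ov" using s small_mono[of a _ Ov] by blast
      moreover have "Ov \<union> - Ov = UNIV" by blast
      ultimately show ?thesis using c(3) a(2) unfolding linked_def by blast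
    qed
  qed
  then show ?thesis using o fE by blast
qed

definition walk :: "'a uprod set list \<Rightarrow> nat \<Rightarrow> bool" where
  "walk xs n \<longleftrightarrow> length xs = Suc n \<and> set xs \<subseteq> AA \<and> (\<forall>i<n. linked (xs ! i) (xs ! Suc i))"

lemma walk_tl: assumes "walk xs (Suc m)" shows "walk (tl xs) m \<and> tl xs ! 0 = xs ! 1 \<and> tl xs ! m = xs ! Suc m
   \<and> linked (xs!0) (xs!1) \<and> xs ! 0 \<in> AA \<and> xs ! 1 \<in> AA"
proof -
  obtain y ys where xs: "xs = y # ys" using assms unfolding walk_def by (cases xs) auto
  show ?thesis using assms unfolding xs walk_def by (auto simp: nth_Cons')
qed

lemma GL:
  assumes "p \<in> (UNIV::'a set)"
  shows "\<forall>W. open W \<longrightarrow> p \<in> W \<longrightarrow> (\<exists>Ov F. open Ov \<and> p \<in> Ov \<and> Ov \<subseteq> W \<and> finite F \<and> F \<subseteq> AA \<and>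
     (\<forall>n\<le>k. \<forall>xs. walk xs n \<longrightarrow> xs!0 \<notin> F \<longrightarrow> small (xs!0) (- Ov) \<longrightarrow> small (xs!n) (- W)))"
proof (induction k)
  case 0
  show ?case
  proof (intro allI impI)
    fix W :: "'a set" assume "open W" "p \<in> W"
    have "\<forall>n\<le>0. \<forall>xs. walk xs n \<longrightarrow> xs!0 \<notin> {} \<longrightarrow> small (xs!0) (- W) \<longrightarrow> small (xs!n) (- W)" by simp
    then show "\<exists>Ov F. open Ov \<and> p \<in> Ov \<and> Ov \<subseteq> W \<and> finite F \<and> F \<subseteq> AA \<and>
     (\<forall>n\<le>0. \<forall>xs. walk xs n \<longrightarrow> xs!0 \<notin> F \<longrightarrow> small (xs!0) (- Ov) \<longrightarrow> small (xs!n) (- W))"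
      using \<open>open W\<close> \<open>p \<in> W\<close> by blast
  qed
next
  case (Suc k)
  show ?case
  proof (intro allI impI)
    fix W :: "'a set" assume W: "open W" "p \<in> W"
    obtain O' F' where IH: "open O'" "p \<in> O'" "O' \<subseteq> W" "finite F'" "F' \<subseteq> AA"
      "\<forall>n\<le>k. \<forall>xs. walk xs n \<longrightarrow> xs!0 \<notin> F' \<longrightarrow> small (xs!0) (- O') \<longrightarrow> small (xs!n) (- W)"
      using Suc.IH[rule_format, OF W] by blast
    obtain Ov E where L: "open Ov" "p \<in> Ov" "Ov \<subseteq> O'" "finite E" "E \<subseteq> AA"
      "\<forall>c\<in>AA. c \<notin> E \<longrightarrow> small c (- Ov) \<longrightarrow> (\<forall>a\<in>AA. linked a c \<longrightarrow> small a (- O'))"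
      using L2lem[OF IH(1,2)] by blast
    define F where "F = F' \<union> E \<union> {c\<in>AA. \<exists>x\<in>F'. linked c x}"
    have fF: "finite F" "F \<subseteq> AA" unfolding F_def using IH(4,5) L(4,5) nbr by auto
    have "\<forall>n\<le>Suc k. \<forall>xs. walk xs n \<longrightarrow> xs!0 \<notin> F \<longrightarrow> small (xs!0) (- Ov) \<longrightarrow> small (xs!n) (- W)"
    proof (intro allI impI)
      fix n xs assume n: "n \<le> Suc k" and w: "walk xs n" and x0: "xs!0 \<notin> F" and s0: "small (xs!0) (- Ov)"
      show "small (xs!n) (- W)"
      proof (cases n)
        case 0
        then show ?thesis using s0 L(3) IH(3) small_mono by blast
      next
        case (Suc m)
        have wt: "walk (tl xs) m" "tl xs ! 0 = xs ! 1" "tl xs ! m = xs ! Suc m"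
          "linked (xs!0) (xs!1)" "xs ! 0 \<in> AA" "xs ! 1 \<in> AA"
          using walk_tl[of xs m] w Suc by auto
        have "xs!0 \<notin> E" using x0 unfolding F_def by blast
        then have "small (xs!1) (- O')" using L(6) wt(4,5,6) s0 linked_sym by blast
        moreover have "xs!1 \<notin> F'" using x0 wt(4,5) unfolding F_def by blast
        moreover have "m \<le> k" using n Suc by simp
        ultimately have "small (tl xs ! m) (- W)" using IH(6)[rule_format, of m "tl xs"] wt(1,2) by simp
        then show ?thesis using wt(3) Suc by simp
      qed
    qed
    then show "\<exists>Ov F. open Ov \<and> p \<in> Ov \<and> Ov \<subseteq> W \<and> finite F \<and> F \<subseteq> AA \<and>
     (\<forall>n\<le>Suc k. \<forall>xs. walk xs n \<longrightarrow> xs!0 \<notin> F \<longrightarrow> small (xs!0) (- Ov) \<longrightarrow> small (xs!n) (- W))"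
      using L(1,2,3) IH(3) fF by blast
  qed
qed

end


context ctx begin


lemma dA_le:
  assumes "dA AA c b \<le> enat k"
  shows "\<exists>n xs. n \<le> k \<and> walk xs n \<and> xs!0 = c \<and> xs!n = b"
proof (rule ccontr)
  assume na: "\<not> ?thesis"
  let ?S = "{n. \<exists>xs. length xs = Suc n \<and> xs ! 0 = c \<and> xs ! n = b \<and>
       set xs \<subseteq> AA \<and> (\<forall>i<n. linked (xs ! i) (xs ! Suc i))}"
  have "\<forall>n\<in>?S. Suc k \<le> n"
  proof
    fix n assume "n \<in> ?S"
    then obtain xs where "length xs = Suc n \<and> xs ! 0 = c \<and> xs ! n = b \<and>
       set xs \<subseteq> AA \<and> (\<forall>i<n. linked (xs ! i) (xs ! Suc i))" by blast
    then have "walk xs n \<and> xs!0 = c \<and> xs!n = b" unfolding walk_def by blast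
    then have "\<not> n \<le> k" using na by blast
    then show "Suc k \<le> n" by simp
  qed
  then have "enat (Suc k) \<le> (INF n\<in>?S. enat n)" by (intro INF_greatest) auto
  moreover have "(INF n\<in>?S. enat n) \<le> enat k" using assms unfolding dA_def by simp
  ultimately have "enat (Suc k) \<le> enat k" by (rule order_trans)
  then show False by simp
qed

lemma dA_walk: "walk xs n \<Longrightarrow> dA AA (xs!0) (xs!n) \<le> enat n"
  unfolding dA_def walk_def by (rule INF_lower) auto

lemma walk_rev: assumes w: "walk xs n" shows "walk (rev xs) n \<and> rev xs ! 0 = xs ! n \<and> rev xs ! n = xs ! 0"
proof -
  have len: "length xs = Suc n" using w unfolding walk_def by simp
  have rn: "\<And>i. i \<le> n \<Longrightarrow> rev xs ! i = xs ! (n - i)" using len by (simp add: rev_nth)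
  have "\<forall>i<n. linked (rev xs ! i) (rev xs ! Suc i)"
  proof (intro allI impI)
    fix i assume i: "i < n"
    define j where "j = n - Suc i"
    have j: "j < n" "Suc j = n - i" using i unfolding j_def by auto
    have "linked (xs ! j) (xs ! Suc j)" using w j(1) unfolding walk_def by blast
    then have "linked (xs ! (n - i)) (xs ! j)" using j(2) linked_sym by simp
    moreover have "n - Suc i = j" unfolding j_def by simp
    ultimately show "linked (rev xs ! i) (rev xs ! Suc i)" using rn i by simp
  qed
  then show ?thesis using w len rn unfolding walk_def by auto
qed

lemma dA_sym: "dA AA c b \<le> enat k \<Longrightarrow> dA AA b c \<le> enat k"
proof -
  assume "dA AA c b \<le> enat k"
  then obtain n xs where n: "n \<le> k" "walk xs n" "xs!0 = c" "xs!n = b" using dA_le by blast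
  then have "dA AA b c \<le> enat n" using walk_rev[OF n(2)] dA_walk[of "rev xs" n] by simp
  then show "dA AA b c \<le> enat k" using n(1) by (meson enat_ord_simps(1) order_trans)
qed

lemma BallFin:
  assumes "finite S" "S \<subseteq> AA"
  shows "finite {c. \<exists>b\<in>S. \<exists>n\<le>k. \<exists>xs. walk xs n \<and> xs!0 = c \<and> xs!n = b}"
proof (induction k)
  case 0
  have "{c. \<exists>b\<in>S. \<exists>n\<le>0. \<exists>xs. walk xs n \<and> xs!0 = c \<and> xs!n = b} \<subseteq> S" by auto
  then show ?case using assms(1) finite_subset by blast
next
  case (Suc k)
  let ?B = "{c. \<exists>b\<in>S. \<exists>n\<le>k. \<exists>xs. walk xs n \<and> xs!0 = c \<and> xs!n = b}"
  have BA: "?B \<subseteq> AA"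
  proof
    fix c assume "c \<in> ?B"
    then obtain n xs where "walk xs n" "xs!0 = c" by blast
    then show "c \<in> AA" unfolding walk_def by (metis nth_mem subsetD zero_less_Suc)
  qed
  have "{c. \<exists>b\<in>S. \<exists>n\<le>Suc k. \<exists>xs. walk xs n \<and> xs!0 = c \<and> xs!n = b} \<subseteq> ?B \<union> {c\<in>AA. \<exists>x\<in>?B. linked c x}"
  proof
    fix c assume "c \<in> {c. \<exists>b\<in>S. \<exists>n\<le>Suc k. \<exists>xs. walk xs n \<and> xs!0 = c \<and> xs!n = b}"
    then obtain b n xs where b: "b \<in> S" "n \<le> Suc k" "walk xs n" "xs!0 = c" "xs!n = b" by blast
    show "c \<in> ?B \<union> {c\<in>AA. \<exists>x\<in>?B. linked c x}"
    proof (cases n)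
      case 0 then show ?thesis using b by blast
    next
      case (Suc m)
      have wt: "walk (tl xs) m" "tl xs ! 0 = xs ! 1" "tl xs ! m = xs ! Suc m"
          "linked (xs!0) (xs!1)" "xs ! 0 \<in> AA" "xs ! 1 \<in> AA"
        using walk_tl[of xs m] b(3) Suc by auto
      have "xs ! 1 \<in> ?B" using wt(1,2,3) b Suc by (intro CollectI bexI[of _ b]) (auto intro!: exI[of _ m] exI[of _ "tl xs"])
      then show ?thesis using wt(4,5) b(4) by blast
    qed
  qed
  moreover have "finite (?B \<union> {c\<in>AA. \<exists>x\<in>?B. linked c x})" using Suc.IH BA nbr by blast
  ultimately show ?case using finite_subset by blast
qed

end


context ctx begin

lemma notsmall: assumes a: "a \<in> AA" shows "\<exists>x y. x \<noteq> p \<and> y \<noteq> p \<and> Upair x y \<notin> a"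
proof (rule ccontr)
  assume "\<not> ?thesis"
  then have h1: "small a (- {p})" unfolding small_def by blast
  have h2: "small a {p}" unfolding small_def using diag_A[OF a] by blast
  have h3: "- {p} \<union> {p} = UNIV" by blast
  have "\<exists>U V. U \<union> V = UNIV \<and> small a U \<and> small a V"
    by (rule exI[of _ "- {p}"], rule exI[of _ "{p}"]) (intro conjI h3 h1 h2)
  then show False using linked_A[OF a] unfolding linked_def by simp
qed

lemma part1:
  assumes B: "B \<subseteq> AA"
  shows "acc_point (nbhd AA d B) p \<longleftrightarrow> acc_point B p"
proof
  assume acc: "acc_point (nbhd AA d B) p"
  show "acc_point B p" unfolding acc_point_def
  proof (intro allI impI)
    fix W :: "'a set" assume W: "open W \<and> p \<in> W"
    show "infinite {b \<in> B. small b (- W)}"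
    proof
      assume finS: "finite {b \<in> B. small b (- W)}"
      let ?S = "{b \<in> B. small b (- W)}"
      obtain Ov F where G: "open Ov" "p \<in> Ov" "Ov \<subseteq> W" "finite F" "F \<subseteq> AA"
        "\<forall>n\<le>d. \<forall>xs. walk xs n \<longrightarrow> xs!0 \<notin> F \<longrightarrow> small (xs!0) (- Ov) \<longrightarrow> small (xs!n) (- W)"
        using GL[of p d, OF UNIV_I, rule_format, of W] W by blast
      have inf: "infinite {c \<in> nbhd AA d B. small c (- Ov)}" using acc G(1,2) unfolding acc_point_def by blast
      have "{c \<in> nbhd AA d B. small c (- Ov)} \<subseteq> F \<union> {c. \<exists>b\<in>?S. \<exists>n\<le>d. \<exists>xs. walk xs n \<and> xs!0 = c \<and> xs!n = b}"
      proof
        fix c assume c: "c \<in> {c \<in> nbhd AA d B. small c (- Ov)}"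
        show "c \<in> F \<union> {c. \<exists>b\<in>?S. \<exists>n\<le>d. \<exists>xs. walk xs n \<and> xs!0 = c \<and> xs!n = b}"
        proof (cases "c \<in> F")
          case False
          obtain b where b: "b \<in> B" "dA AA c b \<le> enat d" using c unfolding nbhd_def by blast
          obtain n xs where n: "n \<le> d" "walk xs n" "xs!0 = c" "xs!n = b" using dA_le[OF b(2)] by blast
          have "small (xs!n) (- W)" using G(6)[rule_format, OF n(1) n(2)] n(3) False c by blast
          then have "b \<in> ?S" using b(1) n(4) by blast
          then have "c \<in> {c. \<exists>b\<in>?S. \<exists>n\<le>d. \<exists>xs. walk xs n \<and> xs!0 = c \<and> xs!n = b}"
            using n by blast
          then show ?thesis by blast
        qed simp
      qed
      moreover have "finite (F \<union> {c. \<exists>b\<in>?S. \<exists>n\<le>d. \<exists>xs. walk xs n \<and> xs!0 = c \<and> xs!n = b})"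
        using G(4) BallFin[OF finS] B by blast
      ultimately show False using inf finite_subset by blast
    qed
  qed
next
  assume acc: "acc_point B p"
  have "B \<subseteq> nbhd AA d B"
  proof
    fix b assume b: "b \<in> B"
    have "walk [b] 0" using b B unfolding walk_def by auto
    then have "dA AA b b \<le> enat 0" using dA_walk[of "[b]" 0] by simp
    then have "dA AA b b \<le> enat d" by (meson enat_ord_simps(1) order_trans zero_le)
    then show "b \<in> nbhd AA d B" unfolding nbhd_def using b B by blast
  qed
  then have sub: "\<And>W. {b\<in>B. small b (- W)} \<subseteq> {b \<in> nbhd AA d B. small b (- W)}" by blast
  show "acc_point (nbhd AA d B) p" unfolding acc_point_def
  proof (intro allI impI)
    fix W :: "'a set" assume "open W \<and> p \<in> W"
    then have "infinite {b\<in>B. small b (- W)}" using acc unfolding acc_point_def by blast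
    then show "infinite {b \<in> nbhd AA d B. small b (- W)}" using sub[of W] infinite_super by blast
  qed
qed

lemma part2:
  assumes b: "range b \<subseteq> AA" and c: "range c \<subseteq> AA" and M: "\<forall>n. dA AA (b n) (c n) \<le> enat M"
    and tb: "ent_tendsto b p"
  shows "ent_tendsto c p"
  unfolding ent_tendsto_def
proof (intro allI impI)
  fix W :: "'a set" assume W: "open W \<and> p \<in> W"
  obtain Ov F where G: "open Ov" "p \<in> Ov" "Ov \<subseteq> W" "finite F" "F \<subseteq> AA"
    "\<forall>n\<le>M. \<forall>xs. walk xs n \<longrightarrow> xs!0 \<notin> F \<longrightarrow> small (xs!0) (- Ov) \<longrightarrow> small (xs!n) (- W)"
    using GL[of p M, OF UNIV_I, rule_format, of W] W by blast
  have e1: "\<forall>\<^sub>F n in sequentially. small (b n) (- Ov)" using tb G(1,2) unfolding ent_tendsto_def by blast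
  have e2: "\<forall>\<^sub>F n in sequentially. \<forall>a\<in>F. b n \<noteq> a"
  proof (rule eventually_ball_finite[OF G(4)], rule ballI)
    fix a assume "a \<in> F"
    then have "a \<in> AA" using G(5) by blast
    then obtain x y where xy: "x \<noteq> p" "y \<noteq> p" "Upair x y \<notin> a" using notsmall by blast
    have "open (- {x,y})" by (intro open_Compl finite_imp_closed) simp
    moreover have "p \<in> - {x,y}" using xy by simp
    ultimately have "\<forall>\<^sub>F n in sequentially. small (b n) (- (- {x,y}))" using tb unfolding ent_tendsto_def by blast
    then show "\<forall>\<^sub>F n in sequentially. b n \<noteq> a"
    proof (rule eventually_mono)
      fix n assume "small (b n) (- (- {x,y}))"
      then have "Upair x y \<in> b n" unfolding small_def by simp
      then show "b n \<noteq> a" using xy(3) by blast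
    qed
  qed
  show "\<forall>\<^sub>F n in sequentially. small (c n) (- W)"
    using e1 e2
  proof (eventually_elim)
    case (elim n)
    obtain m xs where m: "m \<le> M" "walk xs m" "xs!0 = b n" "xs!m = c n" using dA_le M by blast
    have "xs!0 \<notin> F" using elim m(3) by blast
    then have "small (xs!m) (- W)" using G(6)[rule_format, OF m(1) m(2)] m(3) elim by simp
    then show ?case using m(4) by simp
  qed
qed

end

theorem lemma3p12:
  fixes G :: "('g, 'b) monoid_scheme"
    and \<phi> :: "'g \<Rightarrow> 'a::t2_space \<Rightarrow> 'a"
    and a0 :: "'a uprod set"
  assumes "compactum_type TYPE('a)"
    and "homeo_action G \<phi>"
    and "three_discontinuous G \<phi>"
    and "two_cocompact G \<phi>"
    and "entourage a0"
    and "linked a0 a0"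
  defines "A \<equiv> {ent_act \<phi> g a0 | g. g \<in> carrier G}"
  shows "(\<forall>B d. B \<subseteq> A \<and> infinite B \<and> d \<ge> 1 \<longrightarrow>
            (\<forall>p. acc_point (nbhd A d B) p \<longleftrightarrow> acc_point B p))
       \<and> (\<forall>b c p. range b \<subseteq> A \<and> range c \<subseteq> A \<and> (\<exists>M::nat. \<forall>n. dA A (b n) (c n) \<le> enat M) \<longrightarrow>
            (ent_tendsto b p \<longleftrightarrow> ent_tendsto c p))"
proof -
  interpret ctx G \<phi> a0
    using assms(1,2,3,5,6) by unfold_locales
  have AA: "A = AA" unfolding A_def AA_def by simp
  have P1: "\<forall>B d. B \<subseteq> A \<and> infinite B \<and> d \<ge> 1 \<longrightarrow>
            (\<forall>p. acc_point (nbhd A d B) p \<longleftrightarrow> acc_point B p)"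
    unfolding AA using part1 by blast
  have P2: "\<forall>b c p. range b \<subseteq> A \<and> range c \<subseteq> A \<and> (\<exists>M::nat. \<forall>n. dA A (b n) (c n) \<le> enat M) \<longrightarrow>
            (ent_tendsto b p \<longleftrightarrow> ent_tendsto c p)"
  proof (intro allI impI)
    fix b c :: "nat \<Rightarrow> 'a uprod set" and p :: 'a
    assume h: "range b \<subseteq> A \<and> range c \<subseteq> A \<and> (\<exists>M::nat. \<forall>n. dA A (b n) (c n) \<le> enat M)"
    then obtain M where M: "\<forall>n. dA AA (b n) (c n) \<le> enat M" unfolding AA by blast
    then have M': "\<forall>n. dA AA (c n) (b n) \<le> enat M" using dA_sym by blast
    have r: "range b \<subseteq> AA" "range c \<subseteq> AA" using h unfolding AA by auto
    show "ent_tendsto b p \<longleftrightarrow> ent_tendsto c p"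
      using part2[OF r(1) r(2) M] part2[OF r(2) r(1) M'] by blast
  qed
  show ?thesis using P1 P2 by blast
qed

end
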